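(* Let $\varepsilon\ge0$ and $m,M\in(0,1)$ with $m\le M$. Define $L_1,L_2\colon[0,1]\to\mathbb{R}^+$ by \[ L_1(p)=\big(e^{\varepsilon}-(e^{\varepsilon}-1)(pM+(1-p)m)\big)\exp\Big(p\tfrac{M}{m}+(1-p)\tfrac{1-m}{1-(pM+(1-p)m)}-1\Big), \] \[ L_2(p)=\Big(e^{\varepsilon}-(e^{\varepsilon}-1)\Big(pM+(1-p)\tfrac{(M+m)-pM}{2-p}\Big)\Big)\exp\Big(p\tfrac{M}{m}+(1-p)\tfrac{1-\frac{(M+m)-pM}{2-p}}{1-M}-1\Big), \] and $l_1=\ln\circ L_1$, $l_2=\ln\circ L_2$. Then: (i) If $\varepsilon\ne0$ and $m\ne M$, $L_1$ and $l_1$ attain their maximum over $[0,1]$ at $p_1=\min\{1,\max\{V_1,0\}\}$, where \[ V_1=\begin{cases}-\frac{1}{3a_1}\Big(b_1+\sqrt[3]{\tfrac{D_{1,1}+\sqrt{D_{1,1}^2-4D_{1,0}^3}}{2}}+\sqrt[3]{\tfrac{D_{1,1}-\sqrt{D_{1,1}^2-4D_{1,0}^3}}{2}}\Big)&\text{if }D_{1,1}^2-4D_{1,0}^3>0,\\[2mm] -\frac{1}{3a_1}\Big(b_1+2\sqrt{D_{1,0}}\cos\big(\tfrac13\arccos\big(\tfrac{D_{1,1}}{2R_1}\big)\big)\Big)&\text{if }D_{1,1}^2-4D_{1,0}^3\le0,\end{cases} \] with $a_1=(e^{\varepsilon}-1)\frac{M}{m}(M-m)^2$, $b_1=-\frac{M-m}{m}\big((m^2-4Mm+2M)(e^{\varepsilon}-1)+e^{\varepsilon}M\big)$,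 $c_1=\frac{1-m}{m}\big((e^{\varepsilon}-1)(2m^2-4Mm-m)+(3e^{\varepsilon}-1)M\big)$, $d_1=-(1-m)\big((e^{\varepsilon}-1)(m-2)+\frac{e^{\varepsilon}}{m}\big)$, $D_{1,0}=b_1^2-3a_1c_1$, $D_{1,1}=2b_1^3-9a_1b_1c_1+27a_1^2d_1$, $R_1=\sqrt{D_{1,0}^3}$; and $L_2$ and $l_2$ attain their maximum over $[0,1]$ at $p_2=\min\{1,\max\{V_2,0\}\}$, where \[ V_2=-\frac{1}{3a_2}\Big(b_2+2\sqrt{D_{2,0}}\cos\Big(\tfrac13\arccos\Big(\tfrac{D_{2,1}}{2R_2}\Big)\Big)\Big) \] with $a_2=\frac{e^{\varepsilon}-(e^{\varepsilon}-1)m}{m}$, $b_2=-\frac{6e^{\varepsilon}-(e^{\varepsilon}-1)(M+5m)}{m}$, $c_2=\frac{1}{(1-M)m}\big(m((e^{\varepsilon}-1)(m+9M-9)-e^{\varepsilon})+4M((e^{\varepsilon}-1)M-4e^{\varepsilon}+1)+12e^{\varepsilon}\big)$, $d_2=-(2e^{\varepsilon}-(e^{\varepsilon}-1)(M+m))\frac{4-4M-m}{(1-M)m}+2(e^{\varepsilon}-1)$, $D_{2,0}=b_2^2-3a_2c_2$, $D_{2,1}=2b_2^3-9a_2b_2c_2+27a_2^2d_2$, $R_2=\sqrt{D_{2,0}^3}$. (ii) If $\varepsilon=0$ and $m\ne M$, $L_1$ and $l_1$ attain their maximum over $[0,1]$ at $p_1=\min\{1,\max\{V_1,0\}\}$ with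 $V_1=\frac{1-m}{M-m}-\frac{\sqrt{Mm(1-m)(1-M)}}{M(M-m)}$, and $L_2$ and $l_2$ attain their maximum over $[0,1]$ at $p_2=\min\{1,\max\{V_2,0\}\}$ with $V_2=2-\frac{\sqrt{m(1-M)}}{1-M}$. (iii) If $m=M$, $L_1$ and $L_2$ are constantly equal to $e^{\varepsilon}-(e^{\varepsilon}-1)m$.
   Context: Cube roots $\sqrt[3]{\cdot}$ of real numbers denote the real cube root. *)

theory Defs
  imports Complex_Main
begin

definition L1 :: "real \<Rightarrow> real \<Rightarrow> real \<Rightarrow> real \<Rightarrow> real" where
  "L1 eps m M p =
     (exp eps - (exp eps - 1) * (p * M + (1 - p) * m)) *
     exp (p * (M / m) + (1 - p) * ((1 - m) / (1 - (p * M + (1 - p) * m))) - 1)"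

definition L2 :: "real \<Rightarrow> real \<Rightarrow> real \<Rightarrow> real \<Rightarrow> real" where
  "L2 eps m M p =
     (let q = ((M + m) - p * M) / (2 - p) in
     (exp eps - (exp eps - 1) * (p * M + (1 - p) * q)) *
     exp (p * (M / m) + (1 - p) * ((1 - q) / (1 - M)) - 1))"

definition l1 :: "real \<Rightarrow> real \<Rightarrow> real \<Rightarrow> real \<Rightarrow> real" where
  "l1 eps m M p = ln (L1 eps m M p)"

definition l2 :: "real \<Rightarrow> real \<Rightarrow> real \<Rightarrow> real \<Rightarrow> real" where
  "l2 eps m M p = ln (L2 eps m M p)"

definition attains_max_at :: "(real \<Rightarrow> real) \<Rightarrow> real set \<Rightarrow> real \<Rightarrow> bool" where
  "attains_max_at f S p \<longleftrightarrow> p \<in> S \<and> (\<forall>q\<in>S. f q \<le> f p)"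

definition a1 :: "real \<Rightarrow> real \<Rightarrow> real \<Rightarrow> real" where
  "a1 eps m M = (exp eps - 1) * (M / m) * (M - m)^2"
definition b1 :: "real \<Rightarrow> real \<Rightarrow> real \<Rightarrow> real" where
  "b1 eps m M = - ((M - m) / m) * ((m^2 - 4*M*m + 2*M) * (exp eps - 1) + exp eps * M)"
definition c1 :: "real \<Rightarrow> real \<Rightarrow> real \<Rightarrow> real" where
  "c1 eps m M = ((1 - m) / m) * ((exp eps - 1) * (2*m^2 - 4*M*m - m) + (3 * exp eps - 1) * M)"
definition d1 :: "real \<Rightarrow> real \<Rightarrow> real \<Rightarrow> real" where
  "d1 eps m M = - (1 - m) * ((exp eps - 1) * (m - 2) + exp eps / m)"
definition D10 :: "real \<Rightarrow> real \<Rightarrow> real \<Rightarrow> real" where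
  "D10 eps m M = (b1 eps m M)^2 - 3 * a1 eps m M * c1 eps m M"
definition D11 :: "real \<Rightarrow> real \<Rightarrow> real \<Rightarrow> real" where
  "D11 eps m M = 2 * (b1 eps m M)^3 - 9 * a1 eps m M * b1 eps m M * c1 eps m M
                 + 27 * (a1 eps m M)^2 * d1 eps m M"
definition R1 :: "real \<Rightarrow> real \<Rightarrow> real \<Rightarrow> real" where
  "R1 eps m M = sqrt ((D10 eps m M)^3)"

(* root 3 is the real cube root (odd root, sign-preserving) *)
definition V1 :: "real \<Rightarrow> real \<Rightarrow> real \<Rightarrow> real" where
  "V1 eps m M =
    (let a = a1 eps m M; b = b1 eps m M; D0 = D10 eps m M; D1 = D11 eps m M;
         \<Delta> = D1^2 - 4 * D0^3 in
     if \<Delta> > 0 then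
       - (1 / (3 * a)) * (b + root 3 ((D1 + sqrt \<Delta>) / 2) + root 3 ((D1 - sqrt \<Delta>) / 2))
     else
       - (1 / (3 * a)) * (b + 2 * sqrt D0 * cos ((1/3) * arccos (D1 / (2 * R1 eps m M)))))"

definition a2 :: "real \<Rightarrow> real \<Rightarrow> real \<Rightarrow> real" where
  "a2 eps m M = (exp eps - (exp eps - 1) * m) / m"
definition b2 :: "real \<Rightarrow> real \<Rightarrow> real \<Rightarrow> real" where
  "b2 eps m M = - (6 * exp eps - (exp eps - 1) * (M + 5*m)) / m"
definition c2 :: "real \<Rightarrow> real \<Rightarrow> real \<Rightarrow> real" where
  "c2 eps m M = (1 / ((1 - M) * m)) *
     (m * ((exp eps - 1) * (m + 9*M - 9) - exp eps)
      + 4 * M * ((exp eps - 1) * M - 4 * exp eps + 1) + 12 * exp eps)"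
definition d2 :: "real \<Rightarrow> real \<Rightarrow> real \<Rightarrow> real" where
  "d2 eps m M = - (2 * exp eps - (exp eps - 1) * (M + m)) * ((4 - 4*M - m) / ((1 - M) * m))
                + 2 * (exp eps - 1)"
definition D20 :: "real \<Rightarrow> real \<Rightarrow> real \<Rightarrow> real" where
  "D20 eps m M = (b2 eps m M)^2 - 3 * a2 eps m M * c2 eps m M"
definition D21 :: "real \<Rightarrow> real \<Rightarrow> real \<Rightarrow> real" where
  "D21 eps m M = 2 * (b2 eps m M)^3 - 9 * a2 eps m M * b2 eps m M * c2 eps m M
                 + 27 * (a2 eps m M)^2 * d2 eps m M"
definition R2 :: "real \<Rightarrow> real \<Rightarrow> real \<Rightarrow> real" where
  "R2 eps m M = sqrt ((D20 eps m M)^3)"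
definition V2 :: "real \<Rightarrow> real \<Rightarrow> real \<Rightarrow> real" where
  "V2 eps m M = - (1 / (3 * a2 eps m M)) *
     (b2 eps m M + 2 * sqrt (D20 eps m M) *
        cos ((1/3) * arccos (D21 eps m M / (2 * R2 eps m M))))"

definition V1_0 :: "real \<Rightarrow> real \<Rightarrow> real" where
  "V1_0 m M = (1 - m) / (M - m) - sqrt (M * m * (1 - m) * (1 - M)) / (M * (M - m))"
definition V2_0 :: "real \<Rightarrow> real \<Rightarrow> real" where
  "V2_0 m M = 2 - sqrt (m * (1 - M)) / (1 - M)"

definition clamp01 :: "real \<Rightarrow> real" where
  "clamp01 v = min 1 (max v 0)"

end

theory Submission
  imports Defs
begin

lemma depress:
  fixes a b c d x :: real
  shows "27*a^2*(a*x^3+b*x^2+c*x+d) = (3*a*x+b)^3 - 3*(b^2-3*a*c)*(3*a*x+b) + (2*b^3-9*a*b*c+27*a^2*d)"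
  by algebra

lemma trig_root:
  fixes D0 D1 :: real
  assumes disc: "D1^2 - 4*D0^3 \<le> 0"
    and y0: "y0 = - (2 * sqrt D0 * cos ((1/3) * arccos (D1 / (2 * sqrt (D0^3)))))"
  shows "y0^3 - 3*D0*y0 + D1 = 0" "\<And>y. y < y0 \<Longrightarrow> y^3 - 3*D0*y + D1 < 0"
proof -
  have "D0 \<ge> 0"
  proof (rule ccontr)
    assume "\<not> D0 \<ge> 0"
    then have "D0^3 < 0" by (simp add: power3_eq_cube mult_neg_neg mult_pos_neg)
    moreover have "D1^2 \<ge> 0" by simp
    ultimately show False using disc by linarith
  qed
  define s where "s = sqrt D0"
  have s0: "s \<ge> 0" and D0s: "D0 = s^2" using \<open>D0 \<ge> 0\<close> by (auto simp: s_def)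
  have R: "sqrt (D0^3) = s^3" by (simp add: s_def real_sqrt_power)
  define t where "t = (1/3) * arccos (D1 / (2 * s^3))"
  have y0t: "y0 = - (2 * s * cos t)" using y0 R by (simp add: s_def t_def)
  have main: "y0^3 - 3*D0*y0 + D1 = 0 \<and> (y0^2 - D0 \<ge> 0) \<and> y0 \<le> 0"
  proof (cases "s = 0")
    case True
    then have "D0 = 0" using D0s by simp
    then have "D1 = 0" using disc by simp
    then show ?thesis using y0t True \<open>D0 = 0\<close> by simp
  next
    case False
    then have sp: "s > 0" using s0 by simp
    define w where "w = D1 / (2 * s^3)"
    have "D1^2 \<le> 4 * s^6" using disc D0s by (simp add: power_mult[symmetric])
    then have "w^2 \<le> 1" using sp by (simp add: w_def power_divide field_simps power_mult_distrib)
    then have wb: "-1 \<le> w" "w \<le> 1" using abs_le_square_iff[of w 1] by auto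
    have "cos (3*t) = w" using wb by (simp add: t_def w_def)
    then have c3: "4 * cos t ^ 3 - 3 * cos t = w" by (simp add: cos_treble_cos)
    have "0 \<le> t" "t \<le> pi/3" using arccos_lbound[OF wb] arccos_ubound[OF wb] by (auto simp: t_def w_def)
    then have "cos (pi/3) \<le> cos t" by (intro cos_monotone_0_pi_le) auto
    then have ch: "cos t \<ge> 1/2" by (simp add: cos_60)
    have "D1 = 2*s^3*w" using sp by (simp add: w_def)
    then have e1: "y0^3 - 3*D0*y0 + D1 = 0"
      unfolding y0t D0s c3[symmetric] by (simp add: algebra_simps power3_eq_cube power2_eq_square)
    have "(2*cos t)^2 \<ge> 1^2" using ch by (intro power_mono) auto
    then have "y0^2 - D0 = s^2 * ((2*cos t)^2 - 1)" unfolding y0t D0s by (simp add: algebra_simps power2_eq_square)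
    also have "\<dots> \<ge> 0" using \<open>(2*cos t)^2 \<ge> 1^2\<close> by simp
    finally have e2: "y0^2 - D0 \<ge> 0" .
    have "y0 \<le> 0" using y0t sp ch by simp
    then show ?thesis using e1 e2 by simp
  qed
  then show "y0^3 - 3*D0*y0 + D1 = 0" by simp
  fix y assume "y < y0"
  have fac: "y^3 - 3*D0*y + D1 = (y - y0) * ((y0^2 - D0)*3 + (y - y0)*(y + 2*y0))"
    using main by (simp add: algebra_simps power3_eq_cube power2_eq_square)
  have "(y - y0)*(y + 2*y0) > 0" using \<open>y < y0\<close> main by (intro mult_neg_neg) auto
  moreover have "y0^2 - D0 \<ge> 0" using main by simp
  ultimately have "(y0^2 - D0)*3 + (y - y0)*(y + 2*y0) > 0" by (intro add_nonneg_pos) auto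
  then show "y^3 - 3*D0*y + D1 < 0" unfolding fac using \<open>y < y0\<close> by (simp add: mult_neg_pos)
qed

lemma cardano_root:
  fixes D0 D1 :: real
  assumes disc: "D1^2 - 4*D0^3 > 0"
    and y0: "y0 = - (root 3 ((D1 + sqrt (D1^2 - 4*D0^3)) / 2) + root 3 ((D1 - sqrt (D1^2 - 4*D0^3)) / 2))"
  shows "y0^3 - 3*D0*y0 + D1 = 0" "\<And>y. y < y0 \<Longrightarrow> y^3 - 3*D0*y + D1 < 0"
        "\<And>y. y > y0 \<Longrightarrow> y^3 - 3*D0*y + D1 > 0"
proof -
  define r where "r = sqrt (D1^2 - 4*D0^3)"
  have r0: "r > 0" and r2: "r^2 = D1^2 - 4*D0^3" using disc by (auto simp: r_def)
  define u where "u = root 3 ((D1 + r) / 2)"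
  define v where "v = root 3 ((D1 - r) / 2)"
  have u3: "u^3 = (D1 + r)/2" by (simp add: u_def odd_real_root_pow)
  have v3: "v^3 = (D1 - r)/2" by (simp add: v_def odd_real_root_pow)
  have "u*v = root 3 (((D1 + r)/2) * ((D1 - r)/2))" by (simp only: u_def v_def real_root_mult)
  also have "((D1 + r)/2) * ((D1 - r)/2) = D0^3" using r2 by (simp add: field_simps power2_eq_square) 
  also have "root 3 (D0^3) = D0" by (simp add: odd_real_root_power_cancel)
  finally have uv: "u*v = D0" .
  have "u \<noteq> v"
  proof
    assume "u = v" then have "u^3 = v^3" by simp
    then show False using u3 v3 r0 by simp
  qed
  have y0uv: "y0 = -(u+v)" using y0 by (simp add: u_def v_def r_def)
  have D1uv: "D1 = u^3 + v^3" using u3 v3 by simp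
  have fac: "\<And>y. y^3 - 3*D0*y + D1 = (y - y0) * ((y + y0/2)^2 + 3/4*(u-v)^2)"
    unfolding y0uv D1uv uv[symmetric] by algebra
  have pos: "\<And>y. (y + y0/2)^2 + 3/4*(u-v)^2 > 0"
  proof -
    fix y
    have "(u-v)^2 > 0" using \<open>u \<noteq> v\<close> by simp
    then show "(y + y0/2)^2 + 3/4*(u-v)^2 > 0" by (intro add_nonneg_pos) auto
  qed
  show "y0^3 - 3*D0*y0 + D1 = 0" using fac[of y0] by simp
  show "\<And>y. y < y0 \<Longrightarrow> y^3 - 3*D0*y + D1 < 0" using fac pos by (simp add: mult_neg_pos)
  show "\<And>y. y > y0 \<Longrightarrow> y^3 - 3*D0*y + D1 > 0" using fac pos by simp
qed

lemma cubic_trig_x: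
  fixes a b c d V :: real
  assumes a: "a > 0"
    and disc: "(2*b^3-9*a*b*c+27*a^2*d)^2 - 4*(b^2-3*a*c)^3 \<le> 0"
    and V: "V = - (1/(3*a)) * (b + 2 * sqrt (b^2-3*a*c) *
               cos ((1/3) * arccos ((2*b^3-9*a*b*c+27*a^2*d) / (2 * sqrt ((b^2-3*a*c)^3)))))"
  shows "a*V^3+b*V^2+c*V+d = 0" "\<And>x. x < V \<Longrightarrow> a*x^3+b*x^2+c*x+d < 0"
proof -
  define D0 where "D0 = b^2-3*a*c"
  define D1 where "D1 = 2*b^3-9*a*b*c+27*a^2*d"
  define y0 where "y0 = - (2 * sqrt D0 * cos ((1/3) * arccos (D1 / (2 * sqrt (D0^3)))))"
  have y0V: "3*a*V + b = y0" using a unfolding V y0_def D0_def D1_def by (simp add: field_simps)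
  note tr = trig_root[OF disc[folded D0_def D1_def] y0_def]
  have "27*a^2*(a*V^3+b*V^2+c*V+d) = 0"
    unfolding depress y0V D0_def[symmetric] D1_def[symmetric] by (rule tr(1))
  then show "a*V^3+b*V^2+c*V+d = 0" using a by simp
  fix x assume "x < V"
  then have "(3*a)*x < (3*a)*V" using a by (intro mult_strict_left_mono) auto
  then have "3*a*x+b < y0" using y0V by simp
  then have "27*a^2*(a*x^3+b*x^2+c*x+d) < 0"
    unfolding depress D0_def[symmetric] D1_def[symmetric] by (rule tr(2))
  then show "a*x^3+b*x^2+c*x+d < 0" using a by (simp add: mult_less_0_iff)
qed

lemma cubic_card_x:
  fixes a b c d V :: real
  assumes a: "a > 0"
    and disc: "(2*b^3-9*a*b*c+27*a^2*d)^2 - 4*(b^2-3*a*c)^3 > 0"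
    and V: "V = - (1/(3*a)) * (b
       + root 3 (((2*b^3-9*a*b*c+27*a^2*d) + sqrt ((2*b^3-9*a*b*c+27*a^2*d)^2 - 4*(b^2-3*a*c)^3)) / 2)
       + root 3 (((2*b^3-9*a*b*c+27*a^2*d) - sqrt ((2*b^3-9*a*b*c+27*a^2*d)^2 - 4*(b^2-3*a*c)^3)) / 2))"
  shows "a*V^3+b*V^2+c*V+d = 0" "\<And>x. x < V \<Longrightarrow> a*x^3+b*x^2+c*x+d < 0"
    "\<And>x. x > V \<Longrightarrow> a*x^3+b*x^2+c*x+d > 0"
proof -
  define D0 where "D0 = b^2-3*a*c"
  define D1 where "D1 = 2*b^3-9*a*b*c+27*a^2*d"
  define y0 where "y0 = - (root 3 ((D1 + sqrt (D1^2 - 4*D0^3)) / 2) + root 3 ((D1 - sqrt (D1^2 - 4*D0^3)) / 2))"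
  have y0V: "3*a*V + b = y0" using a unfolding V y0_def D0_def D1_def by (simp add: field_simps)
  note tr = cardano_root[OF disc[folded D0_def D1_def] y0_def]
  have "27*a^2*(a*V^3+b*V^2+c*V+d) = 0"
    unfolding depress y0V D0_def[symmetric] D1_def[symmetric] by (rule tr(1))
  then show "a*V^3+b*V^2+c*V+d = 0" using a by simp
  show "a*x^3+b*x^2+c*x+d < 0" if "x < V" for x
  proof -
    have "(3*a)*x < (3*a)*V" using that a by (intro mult_strict_left_mono) auto
    then have "3*a*x+b < y0" using y0V by simp
    then have "27*a^2*(a*x^3+b*x^2+c*x+d) < 0"
      unfolding depress D0_def[symmetric] D1_def[symmetric] by (rule tr(2))
    then show ?thesis using a by (simp add: mult_less_0_iff)
  qed
  show "a*x^3+b*x^2+c*x+d > 0" if "x > V" for x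
  proof -
    have "(3*a)*V < (3*a)*x" using that a by (intro mult_strict_left_mono) auto
    then have "3*a*x+b > y0" using y0V by simp
    then have "27*a^2*(a*x^3+b*x^2+c*x+d) > 0"
      unfolding depress D0_def[symmetric] D1_def[symmetric] by (rule tr(3))
    then show ?thesis using a by (simp add: zero_less_mult_iff)
  qed
qed

lemma disc_nonpos:
  fixes a b c d xA xB :: real
  assumes a: "a > 0" and "xA < xB" and A: "a*xA^3+b*xA^2+c*xA+d > 0" and B: "a*xB^3+b*xB^2+c*xB+d < 0"
  shows "(2*b^3-9*a*b*c+27*a^2*d)^2 - 4*(b^2-3*a*c)^3 \<le> 0"
proof (rule ccontr)
  assume "\<not> ?thesis"
  then have disc: "(2*b^3-9*a*b*c+27*a^2*d)^2 - 4*(b^2-3*a*c)^3 > 0" by simp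
  note cc = cubic_card_x[OF a disc refl]
  define V where "V = - (1/(3*a)) * (b
       + root 3 (((2*b^3-9*a*b*c+27*a^2*d) + sqrt ((2*b^3-9*a*b*c+27*a^2*d)^2 - 4*(b^2-3*a*c)^3)) / 2)
       + root 3 (((2*b^3-9*a*b*c+27*a^2*d) - sqrt ((2*b^3-9*a*b*c+27*a^2*d)^2 - 4*(b^2-3*a*c)^3)) / 2))"
  have "xA > V"
  proof (rule ccontr)
    assume "\<not> xA > V"
    then consider "xA < V" | "xA = V" by linarith
    then show False using cc(1)[folded V_def] cc(2)[folded V_def, of xA] A by cases auto
  qed
  then have "xB > V" using \<open>xA < xB\<close> by simp
  then show False using cc(3)[folded V_def, of xB] B by simp
qed


lemma clamp_max:
  fixes f g :: "real \<Rightarrow> real" and Ps V p :: real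
  assumes P1: "1 < Ps"
    and der: "\<And>x. x < Ps \<Longrightarrow> (f has_real_derivative g x) (at x)"
    and inc: "\<And>x. x \<le> V \<Longrightarrow> x < Ps \<Longrightarrow> 0 \<le> g x"
    and dec: "\<And>x. V \<le> x \<Longrightarrow> x < Ps \<Longrightarrow> g x \<le> 0"
    and p: "p \<in> {0..1}"
  shows "f p \<le> f (clamp01 V)"
proof -
  have p0: "0 \<le> p" "p \<le> 1" using p by auto
  consider "V \<le> 0" | "V \<ge> 1" | "0 < V" "V < 1" by linarith
  then show ?thesis
  proof cases
    case 1
    then have c: "clamp01 V = 0" by (simp add: clamp01_def)
    have "f p \<le> f 0"
      by (rule deriv_nonpos_imp_antimono[where g' = g]) (use der dec 1 P1 p0 in auto)
    then show ?thesis using c by simp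
  next
    case 2
    then have c: "clamp01 V = 1" by (simp add: clamp01_def)
    have "f p \<le> f 1"
      by (rule deriv_nonneg_imp_mono[where g' = g]) (use der inc 2 P1 p0 in auto)
    then show ?thesis using c by simp
  next
    case 3
    then have c: "clamp01 V = V" by (simp add: clamp01_def)
    show ?thesis
    proof (cases "p \<le> V")
      case True
      have "f p \<le> f V"
        by (rule deriv_nonneg_imp_mono[where g' = g]) (use der inc 3 P1 p0 True in auto)
      then show ?thesis using c by simp
    next
      case False
      have "f p \<le> f V"
        by (rule deriv_nonpos_imp_antimono[where g' = g]) (use der dec 3 P1 p0 False in auto)
      then show ?thesis using c by simp
    qed
  qed
qed

lemma clamp01_in: "clamp01 v \<in> {0..1}"
  by (simp add: clamp01_def)

definition f1 :: "real \<Rightarrow> real \<Rightarrow> real \<Rightarrow> real \<Rightarrow> real" where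
  "f1 E m M p = ln (E - (E-1)*(m + p*(M-m))) + p*(M/m) + (1-p)*((1-m)/(1-(m+p*(M-m)))) - 1"
definition g1 :: "real \<Rightarrow> real \<Rightarrow> real \<Rightarrow> real \<Rightarrow> real" where
  "g1 E m M p = -((E-1)*(M-m)/(E-(E-1)*(m+p*(M-m)))) + M/m - (1-m)*(1-M)/(1-(m+p*(M-m)))^2"

lemma L1_pos:
  fixes E m M x :: real
  assumes "E \<ge> 1" "m < M" "M < 1" "0 < m" "x < (1-m)/(M-m)"
  shows "1 - (m + x*(M-m)) > 0" "E - (E-1)*(m + x*(M-m)) \<ge> 1"
proof -
  have "x*(M-m) < 1 - m" using assms by (simp add: field_simps)
  then show q: "1 - (m + x*(M-m)) > 0" by simp
  have "(E-1)*(m + x*(M-m)) \<le> (E-1)*1" using q assms by (intro mult_left_mono) auto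
  then show "E - (E-1)*(m + x*(M-m)) \<ge> 1" by simp
qed

lemma aux1: fixes B :: real assumes "B = 1-(m+x*(M-m))" "B \<noteq> 0"
  shows "(m-1)/B - (1-m)*(m-M)*(1-x)/(B*B) = -((1-m)*(1-M)/B^2)"
proof -
  define X where "X = (1-m)*(m-M)*(1-x)"
  have e: "(m-1)*B - X = -((1-m)*(1-M))" unfolding assms(1) X_def by algebra
  have "(m-1)/B - X/(B*B) = ((m-1)*B)/(B*B) - X/(B*B)" using assms(2) by simp
  also have "\<dots> = ((m-1)*B - X)/(B*B)" by (rule diff_divide_distrib[symmetric])
  also have "\<dots> = -((1-m)*(1-M)/B^2)" using e by (simp add: power2_eq_square)
  finally show ?thesis unfolding X_def .
qed
lemma f1_deriv:
  fixes E m M x :: real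
  assumes "E \<ge> 1" "m < M" "M < 1" "0 < m" "x < (1-m)/(M-m)"
  shows "(f1 E m M has_real_derivative g1 E m M x) (at x)"
proof -
  note pos = L1_pos[OF assms]
  define q where "q = m + x*(M-m)"
  have q1: "1 - q > 0" and qE: "E - (E-1)*q \<ge> 1" using pos by (auto simp: q_def)
  have m0: "m \<noteq> 0" using assms by simp
  have a: "0 < E - (E - 1) * (m + x * (M - m))" and b: "1 - (m + x * (M - m)) \<noteq> 0"
    using pos by auto
  show "(f1 E m M has_real_derivative g1 E m M x) (at x)"
    unfolding f1_def[abs_def]
    apply (rule derivative_eq_intros refl a b | simp)+
    using aux1[OF refl b] unfolding g1_def by simp
qed

lemma g1_antitone:
  fixes E m M x y :: real
  assumes "E \<ge> 1" "m < M" "M < 1" "0 < m" "x \<le> y" "y < (1-m)/(M-m)"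
  shows "g1 E m M y \<le> g1 E m M x"
proof -
  have x: "x < (1-m)/(M-m)" using assms by simp
  note px = L1_pos[OF assms(1-4) x] and py = L1_pos[OF assms(1-4) assms(6)]
  define qx where "qx = m + x*(M-m)"
  define qy where "qy = m + y*(M-m)"
  have qxy: "qx \<le> qy" using assms by (simp add: qx_def qy_def mult_right_mono)
  have bx: "1 - qx > 0" and b_y: "1 - qy > 0" and ax: "E - (E-1)*qx \<ge> 1" and ay: "E - (E-1)*qy \<ge> 1"
    using px py by (auto simp: qx_def qy_def)
  have "E - (E-1)*qy \<le> E - (E-1)*qx" using qxy assms(1) by (simp add: mult_left_mono)
  then have t1: "(E-1)*(M-m)/(E-(E-1)*qx) \<le> (E-1)*(M-m)/(E-(E-1)*qy)"
    using ay assms by (intro divide_left_mono) auto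
  have "(1-qy)^2 \<le> (1-qx)^2" using qxy b_y by (intro power_mono) auto
  then have t2: "(1-m)*(1-M)/(1-qx)^2 \<le> (1-m)*(1-M)/(1-qy)^2"
    using b_y bx assms by (intro divide_left_mono) auto
  show ?thesis using t1 t2 unfolding g1_def qx_def[symmetric] qy_def[symmetric] by linarith
qed

lemma L1_core:
  fixes eps m M V p :: real
  assumes "eps \<ge> 0" "m < M" "M < 1" "0 < m" "V < (1-m)/(M-m)" "g1 (exp eps) m M V = 0"
    "p \<in> {0..1}"
  shows "L1 eps m M p \<le> L1 eps m M (clamp01 V)" "l1 eps m M p \<le> l1 eps m M (clamp01 V)"
proof -
  define E where "E = exp eps"
  have E1: "E \<ge> 1" using assms by (simp add: E_def)
  have Ps: "1 < (1-m)/(M-m)" using assms by (simp add: field_simps)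
  have key: "f1 E m M p \<le> f1 E m M (clamp01 V)"
  proof (rule clamp_max[where Ps = "(1-m)/(M-m)" and g = "g1 E m M"])
    show "1 < (1-m)/(M-m)" by (rule Ps)
    show "\<And>x. x < (1-m)/(M-m) \<Longrightarrow> (f1 E m M has_real_derivative g1 E m M x) (at x)"
      using f1_deriv E1 assms by blast
    show "\<And>x. x \<le> V \<Longrightarrow> x < (1-m)/(M-m) \<Longrightarrow> 0 \<le> g1 E m M x"
      using g1_antitone[OF E1 assms(2-4), of _ V] assms unfolding E_def by fastforce
    show "\<And>x. V \<le> x \<Longrightarrow> x < (1-m)/(M-m) \<Longrightarrow> g1 E m M x \<le> 0"
      using g1_antitone[OF E1 assms(2-4), of V] assms unfolding E_def by fastforce
  qed (rule assms(7))
  have eq: "L1 eps m M x = exp (f1 E m M x)" "l1 eps m M x = f1 E m M x" if "x \<in> {0..1}" for x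
  proof -
    have x: "x < (1-m)/(M-m)" using that Ps by auto
    note px = L1_pos[OF E1 assms(2-4) x]
    have q: "x * M + (1 - x) * m = m + x*(M-m)" by (simp add: algebra_simps)
    show "L1 eps m M x = exp (f1 E m M x)"
      unfolding L1_def f1_def q using px by (simp add: E_def exp_add exp_diff)
    then show "l1 eps m M x = f1 E m M x" by (simp add: l1_def)
  qed
  show "L1 eps m M p \<le> L1 eps m M (clamp01 V)" using key eq[OF assms(7)] eq[OF clamp01_in] by simp
  show "l1 eps m M p \<le> l1 eps m M (clamp01 V)" using key eq[OF assms(7)] eq[OF clamp01_in] by simp
qed


definition f2 :: "real \<Rightarrow> real \<Rightarrow> real \<Rightarrow> real \<Rightarrow> real" where
  "f2 E m M p = ln ((E-(E-1)*M) + (E-(E-1)*m)*(1-p)) - ln (2-p) + p*(M/m) + (1-p)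
     + (M-m)/(1-M) - (M-m)/((1-M)*(2-p)) - 1"
definition g2 :: "real \<Rightarrow> real \<Rightarrow> real \<Rightarrow> real \<Rightarrow> real" where
  "g2 E m M p = -((E-(E-1)*m)/((E-(E-1)*M) + (E-(E-1)*m)*(1-p))) + 1/(2-p) + M/m - 1
     - (M-m)/((1-M)*(2-p)^2)"

lemma ab_pos:
  fixes E m M :: real
  assumes "E \<ge> 1" "m \<le> M" "M < 1" "0 < m"
  shows "E-(E-1)*M > 0" "E-(E-1)*m > 0" "E-(E-1)*M \<le> E-(E-1)*m"
proof -
  have "(E-1)*M < E" using assms by (smt (verit) mult_left_mono mult_right_le_one_le)
  then show a: "E-(E-1)*M > 0" by simp
  have "(E-1)*m < E" using assms by (smt (verit) mult_left_mono mult_right_le_one_le)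
  then show b: "E-(E-1)*m > 0" by simp
  show ab: "E-(E-1)*M \<le> E-(E-1)*m" using assms by (simp add: mult_left_mono)
qed

lemma L2_pos:
  fixes E m M x :: real
  assumes "E \<ge> 1" "m \<le> M" "M < 1" "0 < m" "x < 1 + (E-(E-1)*M)/(E-(E-1)*m)"
  shows "E-(E-1)*M > 0" "E-(E-1)*m > 0" "E-(E-1)*M \<le> E-(E-1)*m"
    "(E-(E-1)*M) + (E-(E-1)*m)*(1-x) > 0" "2 - x > 0"
    "(E-(E-1)*m)*(2-x) \<ge> (E-(E-1)*M) + (E-(E-1)*m)*(1-x)"
proof -
  note ab_pos[OF assms(1-4)]
  then show a: "E-(E-1)*M > 0" and b: "E-(E-1)*m > 0" and ab: "E-(E-1)*M \<le> E-(E-1)*m" by auto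
  have "x - 1 < (E-(E-1)*M)/(E-(E-1)*m)" using assms by simp
  then have "(x-1)*(E-(E-1)*m) < E-(E-1)*M" using b by (simp add: pos_less_divide_eq)
  then show "(E-(E-1)*M) + (E-(E-1)*m)*(1-x) > 0" by (simp add: algebra_simps)
  have "(E-(E-1)*M)/(E-(E-1)*m) \<le> 1" using a b ab by simp
  then show "2 - x > 0" using assms by simp
  show "(E-(E-1)*m)*(2-x) \<ge> (E-(E-1)*M) + (E-(E-1)*m)*(1-x)" using ab by (simp add: algebra_simps)
qed

lemma aux3: fixes N B K :: real assumes "N \<noteq> 0" "B \<noteq> 0"
  shows "K*(-N)/(N*B*(N*B)) = -(K/(N*B^2))"
  using assms by (simp add: field_simps power2_eq_square)

lemma f2_deriv:
  fixes E m M x :: real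
  assumes "E \<ge> 1" "m \<le> M" "M < 1" "0 < m" "x < 1 + (E-(E-1)*M)/(E-(E-1)*m)"
  shows "(f2 E m M has_real_derivative g2 E m M x) (at x)"
proof -
  note pos = L2_pos[OF assms]
  have m0: "m \<noteq> 0" and M1: "1 - M \<noteq> 0" using assms by auto
  have a: "0 < (E-(E-1)*M) + (E-(E-1)*m)*(1-x)" and b: "0 < 2 - x" using pos by auto
  have c: "M \<noteq> 1 \<and> x \<noteq> 2" using pos assms by auto
  have e1: "((E - 1) * m - E) / (E - (E - 1) * M + (E - (E - 1) * m) * (1 - x))
     = -((E-(E-1)*m)/((E-(E-1)*M) + (E-(E-1)*m)*(1-x)))"
    by (metis minus_diff_eq minus_divide_left)
  have e2: "(M - m) * (M - 1) / ((1 - M) * (2 - x) * ((1 - M) * (2 - x))) = -((M-m)/((1-M)*(2-x)^2))"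
  proof -
    have N: "1 - M \<noteq> 0" "2 - x \<noteq> 0" using c by auto
    have h: "M - 1 = -(1-M)" by simp
    show ?thesis unfolding h by (rule aux3[OF N])
  qed
  show ?thesis
    unfolding f2_def[abs_def]
    apply (rule derivative_eq_intros refl a b c | simp)+
    using e1 e2 unfolding g2_def by simp
qed

lemma aux2: fixes B N m :: real assumes "B \<noteq> 0" "N \<noteq> 0"
  shows "(B-1)*((1 - (((1-N)+m) - (2-B)*(1-N))/B)/N) = (B-1) + ((1-N)-m)/N - ((1-N)-m)/(N*B)"
  using assms by (simp add: field_simps)
lemma aux2': fixes x M m :: real assumes "2-x \<noteq> 0" "1-M \<noteq> 0"
  shows "(1-x)*((1 - ((M+m) - x*M)/(2-x))/(1-M)) = (1-x) + (M-m)/(1-M) - (M-m)/((1-M)*(2-x))"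
proof -
  have h: "(2-x) - 1 = 1-x" "1-(1-M) = M" "2-(2-x) = x" by simp_all
  show ?thesis using aux2[OF assms, of m] unfolding h .
qed
lemma g2_antitone:
  fixes E m M x y :: real
  assumes "E \<ge> 1" "m \<le> M" "M < 1" "0 < m" "x \<le> y" "y < 1 + (E-(E-1)*M)/(E-(E-1)*m)"
  shows "g2 E m M y \<le> g2 E m M x"
proof -
  have x: "x < 1 + (E-(E-1)*M)/(E-(E-1)*m)" using assms by simp
  note px = L2_pos[OF assms(1-4) x] and py = L2_pos[OF assms(1-4) assms(6)]
  define al where "al = E-(E-1)*M"
  define be where "be = E-(E-1)*m"
  define Ax where "Ax = al + be*(1-x)"
  define Ay where "Ay = al + be*(1-y)"
  define Bx where "Bx = 2 - x"
  define By where "By = 2 - y"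
  have Ax0: "Ax > 0" and Ay0: "Ay > 0" and Bx0: "Bx > 0" and By0: "By > 0" and be0: "be > 0"
    and hx: "be*Bx \<ge> Ax" and hy: "be*By \<ge> Ay"
    using px py by (auto simp: Ax_def Ay_def Bx_def By_def al_def be_def)
  have "Ax * Ay \<le> (be*Bx)*(be*By)" using hx hy Ax0 Ay0 by (intro mult_mono) auto
  then have c1: "1/(Bx*By) \<le> be^2/(Ax*Ay)"
    using Ax0 Ay0 Bx0 By0 by (simp add: field_simps power2_eq_square)
  have hB: "Bx - By = y - x" by (simp add: Bx_def By_def)
  have hA: "Ay - Ax = be*(x - y)" by (simp add: Ax_def Ay_def algebra_simps)
  have d1: "1/By - 1/Bx = (Bx - By)/(Bx*By)" using Bx0 By0 by (simp add: field_simps)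
  have d2: "be/Ax - be/Ay = be*(Ay - Ax)/(Ax*Ay)" using Ax0 Ay0 by (simp add: field_simps)
  have diff: "(1/By - be/Ay) - (1/Bx - be/Ax) = (y - x) * (1/(Bx*By) - be^2/(Ax*Ay))"
  proof -
    have "(1/By - be/Ay) - (1/Bx - be/Ax) = (1/By - 1/Bx) + (be/Ax - be/Ay)" by simp
    also have "\<dots> = (y-x)/(Bx*By) + be*(be*(x-y))/(Ax*Ay)" unfolding d1 d2 hA hB ..
    also have "\<dots> = (y - x) * (1/(Bx*By) - be^2/(Ax*Ay))"
      by (simp add: algebra_simps power2_eq_square diff_divide_distrib)
    finally show ?thesis .
  qed
  have "(y - x) * (1/(Bx*By) - be^2/(Ax*Ay)) \<le> 0"
    using c1 assms by (intro mult_nonneg_nonpos) auto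
  then have t1: "1/By - be/Ay \<le> 1/Bx - be/Ax" using diff by linarith
  have "By \<le> Bx" using assms by (simp add: Bx_def By_def)
  then have "(1-M)*By^2 \<le> (1-M)*Bx^2" using By0 assms by (intro mult_left_mono power_mono) auto
  then have t2: "(M-m)/((1-M)*Bx^2) \<le> (M-m)/((1-M)*By^2)"
    using By0 Bx0 assms by (intro divide_left_mono mult_pos_pos) auto
  show ?thesis using t1 t2 unfolding g2_def al_def[symmetric] be_def[symmetric]
      Ax_def[symmetric] Ay_def[symmetric] Bx_def[symmetric] By_def[symmetric] by linarith
qed

lemma L2_core:
  fixes eps m M V p :: real
  assumes "eps \<ge> 0" "m \<le> M" "M < 1" "0 < m"
    "V < 1 + (exp eps-(exp eps-1)*M)/(exp eps-(exp eps-1)*m)" "g2 (exp eps) m M V = 0"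
    "p \<in> {0..1}"
  shows "L2 eps m M p \<le> L2 eps m M (clamp01 V)" "l2 eps m M p \<le> l2 eps m M (clamp01 V)"
proof -
  define E where "E = exp eps"
  have E1: "E \<ge> 1" using assms by (simp add: E_def)
  have Ps: "1 < 1 + (E-(E-1)*M)/(E-(E-1)*m)" using ab_pos[OF E1 assms(2-4)] by simp
  have key: "f2 E m M p \<le> f2 E m M (clamp01 V)"
  proof (rule clamp_max[where Ps = "1 + (E-(E-1)*M)/(E-(E-1)*m)" and g = "g2 E m M"])
    show "1 < 1 + (E-(E-1)*M)/(E-(E-1)*m)" by (rule Ps)
    show "\<And>x. x < 1 + (E-(E-1)*M)/(E-(E-1)*m) \<Longrightarrow> (f2 E m M has_real_derivative g2 E m M x) (at x)"
      using f2_deriv E1 assms by blast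
    show "\<And>x. x \<le> V \<Longrightarrow> x < 1 + (E-(E-1)*M)/(E-(E-1)*m) \<Longrightarrow> 0 \<le> g2 E m M x"
      using g2_antitone[OF E1 assms(2-4), of _ V] assms unfolding E_def by fastforce
    show "\<And>x. V \<le> x \<Longrightarrow> x < 1 + (E-(E-1)*M)/(E-(E-1)*m) \<Longrightarrow> g2 E m M x \<le> 0"
      using g2_antitone[OF E1 assms(2-4), of V] assms unfolding E_def by fastforce
  qed (rule assms(7))
  have eq: "L2 eps m M x = exp (f2 E m M x)" "l2 eps m M x = f2 E m M x" if "x \<in> {0..1}" for x
  proof -
    have x: "x < 1 + (E-(E-1)*M)/(E-(E-1)*m)" using that Ps by auto
    note px = L2_pos[OF E1 assms(2-4) x]
    define q where "q = ((M + m) - x * M) / (2 - x)"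
    have x2: "2 - x \<noteq> 0" using px by simp
    have M1: "1 - M \<noteq> 0" using assms by simp
    have A: "E - (E - 1) * (x * M + (1 - x) * q) = ((E-(E-1)*M) + (E-(E-1)*m)*(1-x)) / (2-x)"
      using x2 unfolding q_def by (simp add: field_simps)
    have B: "x * (M / m) + (1 - x) * ((1 - q) / (1 - M)) - 1
      = x*(M/m) + (1-x) + (M-m)/(1-M) - (M-m)/((1-M)*(2-x)) - 1"
      using aux2'[OF x2 M1, of m] unfolding q_def by simp
    have "L2 eps m M x = ((E-(E-1)*M) + (E-(E-1)*m)*(1-x)) / (2-x) *
       exp (x*(M/m) + (1-x) + (M-m)/(1-M) - (M-m)/((1-M)*(2-x)) - 1)"
      unfolding L2_def Let_def q_def[symmetric] E_def[symmetric] A B by simp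
    also have "\<dots> = exp (f2 E m M x)"
      unfolding f2_def using px by (simp add: exp_add exp_diff)
    finally show "L2 eps m M x = exp (f2 E m M x)" .
    then show "l2 eps m M x = f2 E m M x" by (simp add: l2_def)
  qed
  show "L2 eps m M p \<le> L2 eps m M (clamp01 V)" using key eq[OF assms(7)] eq[OF clamp01_in] by simp
  show "l2 eps m M p \<le> l2 eps m M (clamp01 V)" using key eq[OF assms(7)] eq[OF clamp01_in] by simp
qed


lemma G1_poly: fixes E m M p :: real
  shows "-m*(E-1)*(M-m)*(1-(m+p*(M-m)))^2 + M*(E-(E-1)*(m+p*(M-m)))*(1-(m+p*(M-m)))^2
          - m*(1-m)*(1-M)*(E-(E-1)*(m+p*(M-m)))
    = -(M-m)*(((E-1)*M*(M-m)^2)*p^3 + (-(M-m)*((m^2-4*M*m+2*M)*(E-1)+E*M))*p^2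
        + ((1-m)*((E-1)*(2*m^2-4*M*m-m)+(3*E-1)*M))*p + (-(1-m)*((E-1)*(m-2)*m+E)))"
  by algebra

lemma G2_poly: fixes E m M p :: real
  shows "(M-m)*(1-M)*((E-(E-1)*M) + (E-(E-1)*m)*(1-p))*(2-p)^2 - m*(1-M)*(E-(E-1)*m)*(2-p)^2
     + m*(1-M)*((E-(E-1)*M) + (E-(E-1)*m)*(1-p))*(2-p) - m*(M-m)*((E-(E-1)*M) + (E-(E-1)*m)*(1-p))
   = -(M-m)*(((1-M)*(E-(E-1)*m))*p^3 + (-(1-M)*(6*E-(E-1)*(M+5*m)))*p^2
      + (m*((E-1)*(m+9*M-9)-E)+4*M*((E-1)*M-4*E+1)+12*E)*p
      + (-(2*E-(E-1)*(M+m))*(4-4*M-m) + 2*(E-1)*m*(1-M)))"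
  by algebra

lemma P1_id:
  fixes eps m M p :: real
  assumes m0: "m \<noteq> 0"
  shows "-m*(exp eps-1)*(M-m)*(1-(m+p*(M-m)))^2 + M*(exp eps-(exp eps-1)*(m+p*(M-m)))*(1-(m+p*(M-m)))^2
          - m*(1-m)*(1-M)*(exp eps-(exp eps-1)*(m+p*(M-m)))
    = -(M-m)*(m*(a1 eps m M * p^3 + b1 eps m M * p^2 + c1 eps m M * p + d1 eps m M))"
proof -
  define E where "E = exp eps"
  have ha: "m * a1 eps m M = (E-1)*M*(M-m)^2" using m0 by (simp add: a1_def E_def)
  have hb: "m * b1 eps m M = -(M-m)*((m^2-4*M*m+2*M)*(E-1)+E*M)" using m0 by (simp add: b1_def E_def) algebra
  have hc: "m * c1 eps m M = (1-m)*((E-1)*(2*m^2-4*M*m-m)+(3*E-1)*M)" using m0 by (simp add: c1_def E_def)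
  have hd: "m * d1 eps m M = -(1-m)*((E-1)*(m-2)*m+E)" using m0
    by (simp add: d1_def E_def field_simps)
  have "m*(a1 eps m M * p^3 + b1 eps m M * p^2 + c1 eps m M * p + d1 eps m M)
     = (m * a1 eps m M) * p^3 + (m * b1 eps m M) * p^2 + (m * c1 eps m M) * p + m * d1 eps m M"
    by (simp add: algebra_simps)
  then show ?thesis unfolding E_def[symmetric] ha hb hc hd G1_poly by simp
qed

lemma P2_id:
  fixes eps m M p :: real
  assumes m0: "m \<noteq> 0" and M1: "1 - M \<noteq> 0"
  shows "(M-m)*(1-M)*((exp eps-(exp eps-1)*M) + (exp eps-(exp eps-1)*m)*(1-p))*(2-p)^2
     - m*(1-M)*(exp eps-(exp eps-1)*m)*(2-p)^2
     + m*(1-M)*((exp eps-(exp eps-1)*M) + (exp eps-(exp eps-1)*m)*(1-p))*(2-p)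
     - m*(M-m)*((exp eps-(exp eps-1)*M) + (exp eps-(exp eps-1)*m)*(1-p))
   = -(M-m)*((m*(1-M))*(a2 eps m M * p^3 + b2 eps m M * p^2 + c2 eps m M * p + d2 eps m M))"
proof -
  define E where "E = exp eps"
  have ha: "(m*(1-M)) * a2 eps m M = (1-M)*(E-(E-1)*m)" using m0 by (simp add: a2_def E_def)
  have hb: "(m*(1-M)) * b2 eps m M = -(1-M)*(6*E-(E-1)*(M+5*m))" using m0 by (simp add: b2_def E_def) algebra
  have hc: "(m*(1-M)) * c2 eps m M = m*((E-1)*(m+9*M-9)-E)+4*M*((E-1)*M-4*E+1)+12*E"
    using m0 M1 by (simp add: c2_def E_def)
  have hd: "(m*(1-M)) * d2 eps m M = -(2*E-(E-1)*(M+m))*(4-4*M-m) + 2*(E-1)*m*(1-M)"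
    using m0 M1 by (simp add: d2_def E_def field_simps)
  have "(m*(1-M))*(a2 eps m M * p^3 + b2 eps m M * p^2 + c2 eps m M * p + d2 eps m M)
     = ((m*(1-M)) * a2 eps m M) * p^3 + ((m*(1-M)) * b2 eps m M) * p^2 + ((m*(1-M)) * c2 eps m M) * p
       + (m*(1-M)) * d2 eps m M"
    by (simp add: algebra_simps)
  then show ?thesis unfolding E_def[symmetric] ha hb hc hd G2_poly by simp
qed

lemma g1_id:
  fixes E m M p :: real
  assumes m0: "m \<noteq> 0" and A: "E-(E-1)*(m+p*(M-m)) \<noteq> 0" and B: "1-(m+p*(M-m)) \<noteq> 0"
  shows "m*(E-(E-1)*(m+p*(M-m)))*(1-(m+p*(M-m)))^2 * g1 E m M p =
     -m*(E-1)*(M-m)*(1-(m+p*(M-m)))^2 + M*(E-(E-1)*(m+p*(M-m)))*(1-(m+p*(M-m)))^2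
          - m*(1-m)*(1-M)*(E-(E-1)*(m+p*(M-m)))"
proof -
  define A where "A = E-(E-1)*(m+p*(M-m))"
  define B where "B = 1-(m+p*(M-m))"
  have A0: "A \<noteq> 0" and B0: "B \<noteq> 0" using A B by (auto simp: A_def B_def)
  have "m*A*B^2 * g1 E m M p = m*A*B^2 * (-((E-1)*(M-m)/A) + M/m - (1-m)*(1-M)/B^2)"
    unfolding g1_def A_def B_def ..
  also have "\<dots> = -m*(E-1)*(M-m)*B^2 + M*A*B^2 - m*(1-m)*(1-M)*A"
    using m0 A0 B0 by (simp add: field_simps power2_eq_square)
  finally show ?thesis unfolding A_def B_def .
qed

lemma g2_id:
  fixes E m M p :: real
  assumes m0: "m \<noteq> 0" and M1: "1 - M \<noteq> 0"
    and A: "(E-(E-1)*M) + (E-(E-1)*m)*(1-p) \<noteq> 0" and B: "2 - p \<noteq> 0"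
  shows "m*(1-M)*((E-(E-1)*M) + (E-(E-1)*m)*(1-p))*(2-p)^2 * g2 E m M p =
     (M-m)*(1-M)*((E-(E-1)*M) + (E-(E-1)*m)*(1-p))*(2-p)^2 - m*(1-M)*(E-(E-1)*m)*(2-p)^2
     + m*(1-M)*((E-(E-1)*M) + (E-(E-1)*m)*(1-p))*(2-p) - m*(M-m)*((E-(E-1)*M) + (E-(E-1)*m)*(1-p))"
proof -
  define A where "A = (E-(E-1)*M) + (E-(E-1)*m)*(1-p)"
  define B where "B = 2 - p"
  define be where "be = E-(E-1)*m"
  have A0: "A \<noteq> 0" and B0: "B \<noteq> 0" using A B by (auto simp: A_def B_def)
  have "m*(1-M)*A*B^2 * g2 E m M p = m*(1-M)*A*B^2 * (-(be/A) + 1/B + M/m - 1 - (M-m)/((1-M)*B^2))"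
    unfolding g2_def A_def B_def be_def ..
  also have "\<dots> = (M-m)*(1-M)*A*B^2 - m*(1-M)*be*B^2 + m*(1-M)*A*B - m*(M-m)*A"
    using m0 M1 A0 B0 by (simp add: field_simps power2_eq_square)
  finally show ?thesis unfolding A_def B_def be_def .
qed

lemma attains_of:
  assumes "\<And>p. p \<in> {0..1} \<Longrightarrow> f p \<le> f (clamp01 V)"
  shows "attains_max_at f {0..1} (clamp01 V)"
  using assms clamp01_in unfolding attains_max_at_def by blast

lemma case_pos_L1:
  fixes eps m M :: real
  assumes eps: "eps > 0" and m: "0 < m" "m < M" "M < 1"
  shows "attains_max_at (L1 eps m M) {0..1} (clamp01 (V1 eps m M)) \<and>
         attains_max_at (l1 eps m M) {0..1} (clamp01 (V1 eps m M))"
proof -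
  define E where "E = exp eps"
  have E1: "E > 1" using eps by (simp add: E_def)
  define a where "a = a1 eps m M"
  define b where "b = b1 eps m M"
  define c where "c = c1 eps m M"
  define d where "d = d1 eps m M"
  define V where "V = V1 eps m M"
  have a0: "a > 0" using E1 m unfolding a_def a1_def E_def[symmetric] by (simp add: field_simps)
  have cub: "a*V^3+b*V^2+c*V+d = 0 \<and> (\<forall>x<V. a*x^3+b*x^2+c*x+d < 0)"
  proof (cases "(2*b^3-9*a*b*c+27*a^2*d)^2 - 4*(b^2-3*a*c)^3 > 0")
    case True
    have "V = - (1/(3*a)) * (b
       + root 3 (((2*b^3-9*a*b*c+27*a^2*d) + sqrt ((2*b^3-9*a*b*c+27*a^2*d)^2 - 4*(b^2-3*a*c)^3)) / 2)
       + root 3 (((2*b^3-9*a*b*c+27*a^2*d) - sqrt ((2*b^3-9*a*b*c+27*a^2*d)^2 - 4*(b^2-3*a*c)^3)) / 2))"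
      using True unfolding V_def V1_def Let_def D10_def D11_def a_def b_def c_def d_def by simp
    from cubic_card_x[OF a0 True this] show ?thesis by blast
  next
    case False
    then have F: "(2*b^3-9*a*b*c+27*a^2*d)^2 - 4*(b^2-3*a*c)^3 \<le> 0" by simp
    have "V = - (1/(3*a)) * (b + 2 * sqrt (b^2-3*a*c) *
               cos ((1/3) * arccos ((2*b^3-9*a*b*c+27*a^2*d) / (2 * sqrt ((b^2-3*a*c)^3)))))"
      using False unfolding V_def V1_def Let_def D10_def D11_def R1_def a_def b_def c_def d_def by simp
    from cubic_trig_x[OF a0 F this] show ?thesis by blast
  qed
  define Ps where "Ps = (1-m)/(M-m)"
  have mPs: "m + Ps*(M-m) = 1" using m by (simp add: Ps_def)
  have m0: "m \<noteq> 0" using m by simp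
  note id = P1_id[OF m0, of eps M, folded E_def a_def b_def c_def d_def]
  have "-(M-m)*(m*(a*Ps^3+b*Ps^2+c*Ps+d)) = -m*(1-m)*(1-M)"
    using id[of Ps] unfolding mPs by simp
  then have "(M-m)*(m*(a*Ps^3+b*Ps^2+c*Ps+d)) = m*(1-m)*(1-M)"
    by (simp only: mult_minus_left neg_equal_iff_equal)
  moreover have "m*(1-m)*(1-M) > 0" using m by simp
  ultimately have "(M-m)*(m*(a*Ps^3+b*Ps^2+c*Ps+d)) > 0" by (simp only:)
  then have PPs: "a*Ps^3+b*Ps^2+c*Ps+d > 0" using m by (simp add: zero_less_mult_iff)
  have VPs: "V < Ps"
  proof (rule ccontr)
    assume "\<not> V < Ps"
    then consider "Ps < V" | "Ps = V" by linarith
    then show False using cub PPs by cases auto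
  qed
  note pos = L1_pos[of E m M V, OF _ _ _ _ VPs[unfolded Ps_def]]
  have A0: "E-(E-1)*(m+V*(M-m)) \<noteq> 0" and B0: "1-(m+V*(M-m)) \<noteq> 0" using pos E1 m by auto
  have "m*(E-(E-1)*(m+V*(M-m)))*(1-(m+V*(M-m)))^2 * g1 E m M V = 0"
    unfolding g1_id[OF m0 A0 B0] id using cub by simp
  then have g0: "g1 E m M V = 0" using m0 A0 B0 by simp
  have "L1 eps m M p \<le> L1 eps m M (clamp01 V) \<and> l1 eps m M p \<le> l1 eps m M (clamp01 V)"
    if "p \<in> {0..1}" for p
    using L1_core[of eps m M V p] eps m VPs g0 that unfolding Ps_def E_def by auto
  then show ?thesis unfolding V_def by (auto intro: attains_of)
qed

lemma case_pos_L2: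
  fixes eps m M :: real
  assumes eps: "eps > 0" and m: "0 < m" "m < M" "M < 1"
  shows "attains_max_at (L2 eps m M) {0..1} (clamp01 (V2 eps m M)) \<and>
         attains_max_at (l2 eps m M) {0..1} (clamp01 (V2 eps m M))"
proof -
  define E where "E = exp eps"
  have E1: "E > 1" using eps by (simp add: E_def)
  define a where "a = a2 eps m M"
  define b where "b = b2 eps m M"
  define c where "c = c2 eps m M"
  define d where "d = d2 eps m M"
  define V where "V = V2 eps m M"
  define al where "al = E-(E-1)*M"
  define be where "be = E-(E-1)*m"
  have abp: "al > 0" "be > 0" using ab_pos[of E m M] E1 m by (auto simp: al_def be_def)
  have ablt: "al < be" using E1 m by (simp add: al_def be_def)
  have a0: "a > 0" using abp m unfolding a_def a2_def E_def[symmetric] be_def[symmetric] by simp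
  have m0: "m \<noteq> 0" and M1: "1 - M \<noteq> 0" using m by auto
  note id = P2_id[OF m0 M1, of eps, folded E_def a_def b_def c_def d_def, folded al_def be_def]
  define Ps where "Ps = 1 + al/be"
  have APs: "al + be*(1-Ps) = 0" using abp by (simp add: Ps_def algebra_simps)
  have Ps2: "2 - Ps > 0" using abp ablt by (simp add: Ps_def)
  have Ps1: "Ps > 1" using abp by (simp add: Ps_def)
  have "-(M-m)*((m*(1-M))*(a*Ps^3+b*Ps^2+c*Ps+d)) = - (m*(1-M)*be*(2-Ps)^2)"
    using id[of Ps] unfolding APs by simp
  then have "(M-m)*((m*(1-M))*(a*Ps^3+b*Ps^2+c*Ps+d)) = m*(1-M)*be*(2-Ps)^2"
    by (simp only: mult_minus_left neg_equal_iff_equal)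
  moreover have "m*(1-M)*be*(2-Ps)^2 > 0" using m abp Ps2 by simp
  ultimately have "(M-m)*((m*(1-M))*(a*Ps^3+b*Ps^2+c*Ps+d)) > 0" by (simp only:)
  moreover have mM: "m*(1-M) > 0" using m by simp
  ultimately have PPs: "a*Ps^3+b*Ps^2+c*Ps+d > 0" using m by (auto simp add: zero_less_mult_iff)
  have "-(M-m)*((m*(1-M))*(a*2^3+b*2^2+c*2+d)) = - (m*(M-m)*(al - be))"
    using id[of 2] by simp
  then have "(M-m)*((m*(1-M))*(a*2^3+b*2^2+c*2+d)) = m*(M-m)*(al - be)"
    by (simp only: mult_minus_left neg_equal_iff_equal)
  moreover have "m*(M-m)*(al - be) < 0" using m ablt by (simp add: mult_pos_neg)
  ultimately have "(M-m)*((m*(1-M))*(a*2^3+b*2^2+c*2+d)) < 0" by (simp only:)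
  then have P2: "a*2^3+b*2^2+c*2+d < 0" using m mM by (auto simp add: mult_less_0_iff)
  have disc: "(2*b^3-9*a*b*c+27*a^2*d)^2 - 4*(b^2-3*a*c)^3 \<le> 0"
    using disc_nonpos[OF a0 _ PPs P2] Ps2 by simp
  have "V = - (1/(3*a)) * (b + 2 * sqrt (b^2-3*a*c) *
               cos ((1/3) * arccos ((2*b^3-9*a*b*c+27*a^2*d) / (2 * sqrt ((b^2-3*a*c)^3)))))"
    unfolding V_def V2_def D20_def D21_def R2_def a_def b_def c_def d_def by simp
  note cub = cubic_trig_x[OF a0 disc this]
  have VPs: "V < Ps"
  proof (rule ccontr)
    assume "\<not> V < Ps"
    then consider "Ps < V" | "Ps = V" by linarith
    then show False using cub(1) cub(2)[of Ps] PPs by cases auto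
  qed
  note pos = L2_pos[of E m M V, OF _ _ _ _ VPs[unfolded Ps_def al_def be_def]]
  have A0: "al + be*(1-V) \<noteq> 0" and B0: "2 - V \<noteq> 0" using pos E1 m by (auto simp: al_def be_def)
  have "m*(1-M)*(al + be*(1-V))*(2-V)^2 * g2 E m M V = 0"
    using g2_id[OF m0 M1 A0[unfolded al_def be_def] B0, folded al_def be_def] id[of V] cub(1) by simp
  then have g0: "g2 E m M V = 0" using m0 M1 A0 B0 by simp
  have "L2 eps m M p \<le> L2 eps m M (clamp01 V) \<and> l2 eps m M p \<le> l2 eps m M (clamp01 V)"
    if "p \<in> {0..1}" for p
    using L2_core[of eps m M V p] eps m VPs g0 that unfolding Ps_def E_def al_def be_def by auto
  then show ?thesis unfolding V_def by (auto intro: attains_of)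
qed

lemma aux4: fixes u w M m :: real assumes "u \<noteq> 0" "w \<noteq> 0" "M \<noteq> 0" "m \<noteq> 0"
  shows "(u*w)/(M*m*u*w/(M*M)) = M/m"
  using assms by (simp add: field_simps)

lemma case_zero_L1:
  fixes m M :: real
  assumes m: "0 < m" "m < M" "M < 1"
  shows "attains_max_at (L1 0 m M) {0..1} (clamp01 (V1_0 m M)) \<and>
         attains_max_at (l1 0 m M) {0..1} (clamp01 (V1_0 m M))"
proof -
  define V where "V = V1_0 m M"
  define S where "S = sqrt (M*m*(1-m)*(1-M))"
  have S0: "S > 0" using m by (simp add: S_def)
  have S2: "S^2 = M*m*(1-m)*(1-M)" using m by (simp add: S_def)
  have dm: "M - m > 0" "M > 0" using m by auto
  have "V*(M-m) = (1-m)/(M-m)*(M-m) - S/(M*(M-m))*(M-m)"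
    unfolding V_def V1_0_def S_def[symmetric] by (simp add: left_diff_distrib)
  also have "\<dots> = (1-m) - S/M" using dm by simp
  finally have VS: "1 - (m + V*(M-m)) = S/M" by simp
  have "S/M > 0" using S0 dm by simp
  then have "V*(M-m) < 1-m" using VS by linarith
  then have VPs: "V < (1-m)/(M-m)" using dm by (simp add: pos_less_divide_eq)
  have "(S/M)^2 = M*m*(1-m)*(1-M)/(M*M)" unfolding power_divide S2 by (simp add: power2_eq_square)
  moreover have "(1-m)*(1-M)/(M*m*(1-m)*(1-M)/(M*M)) = M/m"
    by (rule aux4) (use m in auto)
  ultimately have "(1-m)*(1-M)/(S/M)^2 = M/m" by simp
  then have g0: "g1 (exp 0) m M V = 0" unfolding g1_def VS by simp
  have "L1 0 m M p \<le> L1 0 m M (clamp01 V) \<and> l1 0 m M p \<le> l1 0 m M (clamp01 V)"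
    if "p \<in> {0..1}" for p
    using L1_core[of 0 m M V p] m VPs g0 that by auto
  then show ?thesis unfolding V_def by (auto intro: attains_of)
qed

lemma case_zero_L2:
  fixes m M :: real
  assumes m: "0 < m" "m < M" "M < 1"
  shows "attains_max_at (L2 0 m M) {0..1} (clamp01 (V2_0 m M)) \<and>
         attains_max_at (l2 0 m M) {0..1} (clamp01 (V2_0 m M))"
proof -
  define V where "V = V2_0 m M"
  define T where "T = sqrt (m*(1-M))"
  have T0: "T > 0" using m by (simp add: T_def)
  have T2: "T^2 = m*(1-M)" using m by (simp add: T_def)
  have M1: "1 - M > 0" using m by simp
  have VT: "2 - V = T/(1-M)" unfolding V_def V2_0_def T_def[symmetric] by simp
  have "T/(1-M) > 0" using M1 T0 by simp
  then have V2: "2 - V > 0" using VT by simp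
  have VPs: "V < 1 + (exp 0-(exp 0-1)*M)/(exp 0-(exp 0-1)*m)"
    using V2 by simp
  have e1: "1 + (1 - V) = 2 - V" by simp
  have "(1-M)*(T/(1-M))^2 = (1-M)*(m*(1-M))/((1-M)*(1-M))"
    unfolding power_divide T2 by (simp add: power2_eq_square)
  also have "\<dots> = m" using M1 by simp
  finally have "(1-M)*(T/(1-M))^2 = m" .
  then have h: "(1-M)*(2-V)^2 = m" unfolding VT .
  have "g2 (exp 0) m M V = M/m - 1 - (M-m)/((1-M)*(2-V)^2)"
    unfolding g2_def by (simp add: e1)
  also have "\<dots> = 0" unfolding h using m by (simp add: field_simps)
  finally have g0: "g2 (exp 0) m M V = 0" .
  have "L2 0 m M p \<le> L2 0 m M (clamp01 V) \<and> l2 0 m M p \<le> l2 0 m M (clamp01 V)"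
    if "p \<in> {0..1}" for p
    using L2_core[of 0 m M V p] m VPs g0 that by auto
  then show ?thesis unfolding V_def by (auto intro: attains_of)
qed

lemma case_eq:
  fixes eps m p :: real
  assumes "0 < m" "m < 1" "p \<in> {0..1}"
  shows "L1 eps m m p = exp eps - (exp eps - 1) * m \<and> L2 eps m m p = exp eps - (exp eps - 1) * m"
proof -
  have p: "2 - p \<noteq> 0" "1 - m \<noteq> 0" using assms by auto
  have q: "((m + m) - p * m) / (2 - p) = m" using p by (simp add: field_simps)
  have e: "p * m + (1 - p) * m = m" by (simp add: algebra_simps)
  have e2: "p * (m / m) + (1 - p) * ((1 - m) / (1 - m)) - 1 = 0" using assms p by simp
  show ?thesis unfolding L1_def L2_def Let_def q e e2 by simp
qed

theorem proposition6:
  fixes eps m M :: real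
  assumes "eps \<ge> 0" and "0 < m" and "m < 1" and "0 < M" and "M < 1" and "m \<le> M"
  shows
    "(eps \<noteq> 0 \<and> m \<noteq> M \<longrightarrow>
        attains_max_at (L1 eps m M) {0..1} (clamp01 (V1 eps m M)) \<and>
        attains_max_at (l1 eps m M) {0..1} (clamp01 (V1 eps m M)) \<and>
        attains_max_at (L2 eps m M) {0..1} (clamp01 (V2 eps m M)) \<and>
        attains_max_at (l2 eps m M) {0..1} (clamp01 (V2 eps m M)))
     \<and> (eps = 0 \<and> m \<noteq> M \<longrightarrow>
        attains_max_at (L1 eps m M) {0..1} (clamp01 (V1_0 m M)) \<and>
        attains_max_at (l1 eps m M) {0..1} (clamp01 (V1_0 m M)) \<and>
        attains_max_at (L2 eps m M) {0..1} (clamp01 (V2_0 m M)) \<and>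
        attains_max_at (l2 eps m M) {0..1} (clamp01 (V2_0 m M)))
     \<and> (m = M \<longrightarrow>
        (\<forall>p\<in>{0..1}. L1 eps m M p = exp eps - (exp eps - 1) * m \<and>
                       L2 eps m M p = exp eps - (exp eps - 1) * m))"
proof -
  have A: "eps \<noteq> 0 \<and> m \<noteq> M \<longrightarrow>
        attains_max_at (L1 eps m M) {0..1} (clamp01 (V1 eps m M)) \<and>
        attains_max_at (l1 eps m M) {0..1} (clamp01 (V1 eps m M)) \<and>
        attains_max_at (L2 eps m M) {0..1} (clamp01 (V2 eps m M)) \<and>
        attains_max_at (l2 eps m M) {0..1} (clamp01 (V2 eps m M))"
  proof
    assume h: "eps \<noteq> 0 \<and> m \<noteq> M"
    then have e: "eps > 0" and mM: "m < M" using assms by auto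
    show "attains_max_at (L1 eps m M) {0..1} (clamp01 (V1 eps m M)) \<and>
        attains_max_at (l1 eps m M) {0..1} (clamp01 (V1 eps m M)) \<and>
        attains_max_at (L2 eps m M) {0..1} (clamp01 (V2 eps m M)) \<and>
        attains_max_at (l2 eps m M) {0..1} (clamp01 (V2 eps m M))"
      using case_pos_L1[OF e assms(2) mM assms(5)] case_pos_L2[OF e assms(2) mM assms(5)] by simp
  qed
  have B: "eps = 0 \<and> m \<noteq> M \<longrightarrow>
        attains_max_at (L1 eps m M) {0..1} (clamp01 (V1_0 m M)) \<and>
        attains_max_at (l1 eps m M) {0..1} (clamp01 (V1_0 m M)) \<and>
        attains_max_at (L2 eps m M) {0..1} (clamp01 (V2_0 m M)) \<and>
        attains_max_at (l2 eps m M) {0..1} (clamp01 (V2_0 m M))"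
  proof
    assume h: "eps = 0 \<and> m \<noteq> M"
    then have e: "eps = 0" and mM: "m < M" using assms by auto
    show "attains_max_at (L1 eps m M) {0..1} (clamp01 (V1_0 m M)) \<and>
        attains_max_at (l1 eps m M) {0..1} (clamp01 (V1_0 m M)) \<and>
        attains_max_at (L2 eps m M) {0..1} (clamp01 (V2_0 m M)) \<and>
        attains_max_at (l2 eps m M) {0..1} (clamp01 (V2_0 m M))"
      using case_zero_L1[OF assms(2) mM assms(5)] case_zero_L2[OF assms(2) mM assms(5)] e by simp
  qed
  have C: "m = M \<longrightarrow>
        (\<forall>p\<in>{0..1}. L1 eps m M p = exp eps - (exp eps - 1) * m \<and>
                       L2 eps m M p = exp eps - (exp eps - 1) * m)"
  proof
    assume h: "m = M"
    show "\<forall>p\<in>{0..1}. L1 eps m M p = exp eps - (exp eps - 1) * m \<and>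
                       L2 eps m M p = exp eps - (exp eps - 1) * m"
      using case_eq[OF assms(2,3)] unfolding h[symmetric] by blast
  qed
  show ?thesis using A B C by blast
qed

end
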